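(* Let $\mathcal{A}=(\mathcal{A}''_4)^*$, let $\alpha$, $e_{11}$, $e_{21}$ be as below, and let $T$ be the Hopf subalgebra of $\mathcal{A}$ generated by $\alpha$ and $y:=e_{11}e_{21}$ (it is isomorphic to the Sweedler algebra $T_{-1}$). (i) If $\pi:\mathcal{A}\to T_{-1}$ is a morphism of Hopf algebras, then $\pi(\mathcal{A})\subseteq k[G(T_{-1})]$ and $T\subseteq\mathcal{A}^{\mathrm{co}\,\pi}$. (ii) $\mathcal{A}$ fits into an exact sequence of Hopf algebras $T\hookrightarrow\mathcal{A}\overset{\psi}{\twoheadrightarrow} k[C_2]$, where $C_2$ is the cyclic group of order $2$.
   Context: $k$ algebraically closed of characteristic $0$. $\mathcal{A}''_4$ is generated by $g,x$ with $g^4=1$, $x^2=g^2-1$, $gx=-xg$, $\Delta(g)=g\otimes g$, $\Delta(x)=x\otimes g+1\otimes x$; $\mathcal{A}$ is its dual. $\alpha\in\mathcal{A}$ is the character $\alpha(g)=-1,\alpha(x)=0$; $e_{jl}=E_{jl}\circ\rho$ where $\rho(g)=\mathrm{diag}(i,-i)$, $\rho(x)=\begin{pmatrix}0&2\\-1&0\end{pmatrix}$ and $E_{jl}$ are matrix coordinate functions. $T_{-1}$ is the Sweedler algebra generated by $g,x$ with $g^2=1,x^2=0,xg=-gx$, $g$ group-like, $\Delta(x)=x\otimes g+1\otimes x$. $H^{\mathrm{co}\,\pi}=\{h:(\mathrm{id}\otimes\pi)\Delta(h)=h\otimes1\}$. Exact sequence $A\hookrightarrow C\overset{\pi}{\twoheadrightarrow}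 B$: $\imath$ injective, $\pi$ surjective, $\pi\imath=\varepsilon$, $\ker\pi=A^+C$, $A=C^{\mathrm{co}\,\pi}$. *)

theory Defs
  imports "HOL-Computational_Algebra.Polynomial" "HOL-Library.Numeral_Type"
begin

text \<open>A finite-dimensional Hopf algebra over a field 'k is presented on a finite basis 'b.
Elements are coordinate vectors 'b => 'k; the tensor square has basis 'b x 'b.
mc b1 b2 b = coefficient of b in the product b1*b2; uc = coordinates of 1;
dc b b1 b2 = coefficient of b1 (x) b2 in Delta(b); ec b = counit of b;
sc b b' = coefficient of b' in S(b).\<close>

record ('b, 'k) hopf_sc =
  mc :: "'b \<Rightarrow> 'b \<Rightarrow> 'b \<Rightarrow> 'k"
  uc :: "'b \<Rightarrow> 'k"
  dc :: "'b \<Rightarrow> 'b \<Rightarrow> 'b \<Rightarrow> 'k"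
  ec :: "'b \<Rightarrow> 'k"
  sc :: "'b \<Rightarrow> 'b \<Rightarrow> 'k"

definition hmult :: "('b::finite, 'k::field) hopf_sc \<Rightarrow> ('b \<Rightarrow> 'k) \<Rightarrow> ('b \<Rightarrow> 'k) \<Rightarrow> ('b \<Rightarrow> 'k)" where
  "hmult H u v = (\<lambda>b. \<Sum>b1\<in>UNIV. \<Sum>b2\<in>UNIV. u b1 * v b2 * mc H b1 b2 b)"

definition hone :: "('b::finite, 'k::field) hopf_sc \<Rightarrow> ('b \<Rightarrow> 'k)" where
  "hone H = uc H"

definition hcomult :: "('b::finite, 'k::field) hopf_sc \<Rightarrow> ('b \<Rightarrow> 'k) \<Rightarrow> ('b \<times> 'b \<Rightarrow> 'k)" where
  "hcomult H u = (\<lambda>(b1, b2). \<Sum>b\<in>UNIV. u b * dc H b b1 b2)"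

definition hcounit :: "('b::finite, 'k::field) hopf_sc \<Rightarrow> ('b \<Rightarrow> 'k) \<Rightarrow> 'k" where
  "hcounit H u = (\<Sum>b\<in>UNIV. u b * ec H b)"

definition hantipode :: "('b::finite, 'k::field) hopf_sc \<Rightarrow> ('b \<Rightarrow> 'k) \<Rightarrow> ('b \<Rightarrow> 'k)" where
  "hantipode H u = (\<lambda>b'. \<Sum>b\<in>UNIV. u b * sc H b b')"

definition dual_hopf :: "('b::finite, 'k::field) hopf_sc \<Rightarrow> ('b, 'k) hopf_sc" where
  "dual_hopf H = \<lparr> mc = (\<lambda>b1 b2 b. dc H b b1 b2), uc = ec H,
                   dc = (\<lambda>b b1 b2. mc H b1 b2 b), ec = uc H,
                   sc = (\<lambda>b b'. sc H b' b) \<rparr>"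

definition basisvec :: "'b \<Rightarrow> ('b \<Rightarrow> 'k::field)" where
  "basisvec b = (\<lambda>b'. if b' = b then 1 else 0)"

definition tens :: "('b \<Rightarrow> 'k::field) \<Rightarrow> ('c \<Rightarrow> 'k) \<Rightarrow> ('b \<times> 'c \<Rightarrow> 'k)" where
  "tens u v = (\<lambda>(b, c). u b * v c)"

definition tmap :: "(('b::finite \<Rightarrow> 'k::field) \<Rightarrow> ('c \<Rightarrow> 'k)) \<Rightarrow> (('d::finite \<Rightarrow> 'k) \<Rightarrow> ('e \<Rightarrow> 'k))
                     \<Rightarrow> ('b \<times> 'd \<Rightarrow> 'k) \<Rightarrow> ('c \<times> 'e \<Rightarrow> 'k)" where
  "tmap f h t = (\<lambda>(c, e). \<Sum>(b, d)\<in>UNIV. t (b, d) * f (basisvec b) c * h (basisvec d) e)"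

definition lspan :: "('b \<Rightarrow> 'k::field) set \<Rightarrow> ('b \<Rightarrow> 'k) set" where
  "lspan S = {v. \<exists>F c. finite F \<and> F \<subseteq> S \<and> v = (\<lambda>x. \<Sum>u\<in>F. c u * u x)}"

definition lsubspace :: "('b \<Rightarrow> 'k::field) set \<Rightarrow> bool" where
  "lsubspace K \<longleftrightarrow> (\<lambda>_. 0) \<in> K \<and> (\<forall>u\<in>K. \<forall>v\<in>K. (\<lambda>x. u x + v x) \<in> K)
                 \<and> (\<forall>c. \<forall>u\<in>K. (\<lambda>x. c * u x) \<in> K)"

definition is_linear :: "(('b \<Rightarrow> 'k::field) \<Rightarrow> ('c \<Rightarrow> 'k)) \<Rightarrow> bool" where
  "is_linear f \<longleftrightarrow> (\<forall>u v. f (\<lambda>x. u x + v x) = (\<lambda>y. f u y + f v y))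
                 \<and> (\<forall>c u. f (\<lambda>x. c * u x) = (\<lambda>y. c * f u y))"

text \<open>Morphism of Hopf algebras (= morphism of bialgebras; it then commutes with antipodes).\<close>
definition hopf_mor :: "('b::finite, 'k::field) hopf_sc \<Rightarrow> ('c::finite, 'k) hopf_sc
                        \<Rightarrow> (('b \<Rightarrow> 'k) \<Rightarrow> ('c \<Rightarrow> 'k)) \<Rightarrow> bool" where
  "hopf_mor H1 H2 f \<longleftrightarrow> is_linear f
     \<and> (\<forall>u v. f (hmult H1 u v) = hmult H2 (f u) (f v))
     \<and> f (hone H1) = hone H2
     \<and> (\<forall>u. hcomult H2 (f u) = tmap f f (hcomult H1 u))
     \<and> (\<forall>u. hcounit H2 (f u) = hcounit H1 u)"

definition hopf_subalg :: "('b::finite, 'k::field) hopf_sc \<Rightarrow> ('b \<Rightarrow> 'k) set \<Rightarrow> bool" where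
  "hopf_subalg H K \<longleftrightarrow> lsubspace K \<and> hone H \<in> K
     \<and> (\<forall>u\<in>K. \<forall>v\<in>K. hmult H u v \<in> K)
     \<and> (\<forall>u\<in>K. hcomult H u \<in> lspan {tens v w | v w. v \<in> K \<and> w \<in> K})
     \<and> (\<forall>u\<in>K. hantipode H u \<in> K)"

definition hopf_gen :: "('b::finite, 'k::field) hopf_sc \<Rightarrow> ('b \<Rightarrow> 'k) set \<Rightarrow> ('b \<Rightarrow> 'k) set" where
  "hopf_gen H X = \<Inter> {K. hopf_subalg H K \<and> X \<subseteq> K}"

definition coinv :: "('b::finite, 'k::field) hopf_sc \<Rightarrow> ('c::finite, 'k) hopf_sc
                     \<Rightarrow> (('b \<Rightarrow> 'k) \<Rightarrow> ('c \<Rightarrow> 'k)) \<Rightarrow> ('b \<Rightarrow> 'k) set" where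
  "coinv H B p = {h. tmap (\<lambda>u. u) p (hcomult H h) = tens h (hone B)}"

definition grouplike :: "('b::finite, 'k::field) hopf_sc \<Rightarrow> ('b \<Rightarrow> 'k) \<Rightarrow> bool" where
  "grouplike H u \<longleftrightarrow> u \<noteq> (\<lambda>_. 0) \<and> hcomult H u = tens u u"

definition kG :: "('b::finite, 'k::field) hopf_sc \<Rightarrow> ('b \<Rightarrow> 'k) set" where
  "kG H = lspan {u. grouplike H u}"

definition exact_seq_incl :: "('b::finite, 'k::field) hopf_sc \<Rightarrow> ('b \<Rightarrow> 'k) set
      \<Rightarrow> ('c::finite, 'k) hopf_sc \<Rightarrow> (('b \<Rightarrow> 'k) \<Rightarrow> ('c \<Rightarrow> 'k)) \<Rightarrow> bool" where
  "exact_seq_incl H K B p \<longleftrightarrow> hopf_subalg H K \<and> hopf_mor H B p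
     \<and> surj p
     \<and> (\<forall>t\<in>K. p t = (\<lambda>c. hcounit H t * hone B c))
     \<and> {u. p u = (\<lambda>_. 0)} = lspan {hmult H t a | t a. t \<in> K \<and> hcounit H t = 0}
     \<and> K = coinv H B p"

text \<open>A''_4: basis g^i x^j, indexed by (i, j) with i :: 4 (exponent mod 4), j = True iff x occurs.
  Relations g^4 = 1, x^2 = g^2 - 1, g x = - x g, so x g^k = (-1)^k g^k x.\<close>

definition odd4 :: "4 \<Rightarrow> bool" where
  "odd4 k \<longleftrightarrow> k = 1 \<or> k = 3"

definition sgn4 :: "bool \<Rightarrow> 4 \<Rightarrow> 'k::field" where
  "sgn4 j k = (if j \<and> odd4 k then -1 else 1)"

definition A4pp :: "(4 \<times> bool, 'k::field) hopf_sc" where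
  "A4pp = \<lparr>
     mc = (\<lambda>(i, j) (k, l) (m, n).
            if j \<and> l then
              \<comment> \<open>g^i x g^k x = (-1)^k (g^(i+k+2) - g^(i+k))\<close>
              (if n then 0 else sgn4 True k * ((if m = i + k + 2 then 1 else 0) - (if m = i + k then 1 else 0)))
            else
              \<comment> \<open>g^i x^j g^k x^l = (-1)^(jk) g^(i+k) x^(j+l)\<close>
              (if m = i + k \<and> n = (j \<or> l) then sgn4 j k else 0)),
     uc = basisvec (0, False),
     dc = (\<lambda>(i, j) (a, p) (c, q).
            if \<not> j then (if a = i \<and> p = False \<and> c = i \<and> q = False then 1 else 0)
            else \<comment> \<open>Delta(g^i x) = g^i x (x) g^(i+1) + g^i (x) g^i x\<close>
              (if a = i \<and> p = True \<and> c = i + 1 \<and> q = False then 1 else 0)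
              + (if a = i \<and> p = False \<and> c = i \<and> q = True then 1 else 0)),
     ec = (\<lambda>(i, j). if j then 0 else 1),
     sc = (\<lambda>(i, j) (m, n).
            if \<not> j then (if m = - i \<and> n = False then 1 else 0)
            else \<comment> \<open>S(g^i x) = (-1)^i g^(-i-1) x\<close>
              (if m = - i - 1 \<and> n = True then (if odd4 i then -1 else 1) else 0)) \<rparr>"

text \<open>The dual Hopf algebra A = (A''_4)^*; its elements are functionals on A''_4, represented
  by their values on the basis g^i x^j.\<close>
definition Adual :: "(4 \<times> bool, 'k::field) hopf_sc" where
  "Adual = dual_hopf A4pp"

text \<open>The character alpha: alpha(g) = -1, alpha(x) = 0, so alpha(g^i x^j) = (-1)^i [j = 0].\<close>
definition alpha :: "4 \<times> bool \<Rightarrow> 'k::field" where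
  "alpha = (\<lambda>(i, j). if j then 0 else (if odd4 i then -1 else 1))"

text \<open>2x2 matrices, indices False = 1, True = 2.\<close>
type_synonym 'k mat2 = "bool \<Rightarrow> bool \<Rightarrow> 'k"

definition mmul :: "'k::field mat2 \<Rightarrow> 'k mat2 \<Rightarrow> 'k mat2" where
  "mmul M N = (\<lambda>r c. \<Sum>m\<in>UNIV. M r m * N m c)"

definition mid :: "'k::field mat2" where
  "mid = (\<lambda>r c. if r = c then 1 else 0)"

primrec mpow :: "'k::field mat2 \<Rightarrow> nat \<Rightarrow> 'k mat2" where
  "mpow M 0 = mid"
| "mpow M (Suc n) = mmul M (mpow M n)"

definition imag :: "'k::field" where
  "imag = (SOME z. z * z = - 1)"

definition rho_g :: "'k::field mat2" where
  "rho_g = (\<lambda>r c. if r \<noteq> c then 0 else if r = False then imag else - imag)"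

definition rho_x :: "'k::field mat2" where
  "rho_x = (\<lambda>r c. if r = False \<and> c = True then 2 else if r = True \<and> c = False then -1 else 0)"

definition rho :: "4 \<times> bool \<Rightarrow> 'k::field mat2" where
  "rho = (\<lambda>(i, j). mmul (mpow rho_g (nat (Rep_bit0 i))) (if j then rho_x else mid))"

definition ecoord :: "bool \<Rightarrow> bool \<Rightarrow> 4 \<times> bool \<Rightarrow> 'k::field" where
  "ecoord r c = (\<lambda>b. rho b r c)"

definition e11 :: "4 \<times> bool \<Rightarrow> 'k::field" where "e11 = ecoord False False"
definition e21 :: "4 \<times> bool \<Rightarrow> 'k::field" where "e21 = ecoord True False"

text \<open>Sweedler algebra T_{-1}: basis g^i x^j, i :: 2, j :: bool; g^2 = 1, x^2 = 0, xg = -gx.\<close>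
definition Tsw :: "(2 \<times> bool, 'k::field) hopf_sc" where
  "Tsw = \<lparr>
     mc = (\<lambda>(i, j) (k, l) (m, n).
            if j \<and> l then 0
            else (if m = i + k \<and> n = (j \<or> l) then (if j \<and> k = 1 then -1 else 1) else 0)),
     uc = basisvec (0, False),
     dc = (\<lambda>(i, j) (a, p) (c, q).
            if \<not> j then (if a = i \<and> p = False \<and> c = i \<and> q = False then 1 else 0)
            else (if a = i \<and> p = True \<and> c = i + 1 \<and> q = False then 1 else 0)
              + (if a = i \<and> p = False \<and> c = i \<and> q = True then 1 else 0)),
     ec = (\<lambda>(i, j). if j then 0 else 1),
     sc = (\<lambda>(i, j) (m, n).
            if \<not> j then (if m = i \<and> n = False then 1 else 0)
            else \<comment> \<open>S(g^i x) = (-1)^i g^(i+1) x\<close>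
              (if m = i + 1 \<and> n = True then (if i = 1 then -1 else 1) else 0)) \<rparr>"

text \<open>Group algebra k[G] of a finite group G (written additively), basis = group elements.\<close>
definition group_alg :: "('g::{finite, group_add}, 'k::field) hopf_sc" where
  "group_alg = \<lparr>
     mc = (\<lambda>a b c. if c = a + b then 1 else 0),
     uc = basisvec 0,
     dc = (\<lambda>a b c. if b = a \<and> c = a then 1 else 0),
     ec = (\<lambda>_. 1),
     sc = (\<lambda>a b. if b = - a then 1 else 0) \<rparr>"

end

theory Submission
  imports Defs
begin
lemma four_cases: "(x::4) = 0 \<or> x = 1 \<or> x = 2 \<or> x = 3"
proof (induct x)
  case (of_int z)
  then have "z = 0 \<or> z = 1 \<or> z = 2 \<or> z = 3" by auto
  then show ?case by auto
qed
lemma U4: "(UNIV::4 set) = {0,1,2,3}"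
  using four_cases by auto
lemma two_cases: "(x::2) = 0 \<or> x = 1"
proof (induct x)
  case (of_int z)
  then have "z = 0 \<or> z = 1" by auto
  then show ?case by auto
qed
lemma U2: "(UNIV::2 set) = {0,1}"
  using two_cases by auto
lemma sum4: "(\<Sum>x\<in>UNIV. (f::4 \<Rightarrow> 'a::comm_monoid_add) x) = f 0 + f 1 + f 2 + f 3"
  apply (subst U4) apply (subst sum.insert, simp, simp)+ apply (simp add: add.assoc) done
lemma sum2: "(\<Sum>x\<in>UNIV. (f::2 \<Rightarrow> 'a::comm_monoid_add) x) = f 0 + f 1"
  apply (subst U2) apply (subst sum.insert, simp, simp)+ apply (simp add: add.assoc) done
lemma sum_prodU: "(\<Sum>x\<in>UNIV. (f::'a::finite\<times>'b::finite \<Rightarrow> 'c::comm_monoid_add) x) = (\<Sum>a\<in>UNIV. \<Sum>b\<in>UNIV. f (a,b))"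
  using sum.cartesian_product[of "\<lambda>a b. f(a,b)" UNIV UNIV] by simp
lemma sumbool: "(\<Sum>x\<in>UNIV. (f::bool \<Rightarrow> 'a::comm_monoid_add) x) = f False + f True"
  apply (subst UNIV_bool) apply (subst sum.insert, simp, simp)+ apply (simp add: add.assoc) done
lemma sum4b: "(\<Sum>x\<in>UNIV. (f::4\<times>bool \<Rightarrow> 'a::comm_monoid_add) x) = f(0,False)+f(0,True)+f(1,False)+f(1,True)+f(2,False)+f(2,True)+f(3,False)+f(3,True)"
  by (simp only: sum_prodU sum4 sumbool add.assoc)
lemma sum2b: "(\<Sum>x\<in>UNIV. (f::2\<times>bool \<Rightarrow> 'a::comm_monoid_add) x) = f(0,False)+f(0,True)+f(1,False)+f(1,True)"
  by (simp only: sum_prodU sum2 sumbool add.assoc)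
lemma dcA_raw: "dc A4pp = (\<lambda>(i, j) (a, p) (c, q).
            if \<not> j then (if a = i \<and> p = False \<and> c = i \<and> q = False then 1 else 0)
            else (if a = i \<and> p = True \<and> c = i + 1 \<and> q = False then 1 else 0)
              + (if a = i \<and> p = False \<and> c = i \<and> q = True then 1 else 0))"
  unfolding A4pp_def hopf_sc.select_convs by (rule refl)
lemma mcA_raw: "mc A4pp = (\<lambda>(i, j) (k, l) (m, n).
            if j \<and> l then
              (if n then 0 else sgn4 True k * ((if m = i + k + 2 then 1 else 0) - (if m = i + k then 1 else 0)))
            else
              (if m = i + k \<and> n = (j \<or> l) then sgn4 j k else 0))"
  unfolding A4pp_def hopf_sc.select_convs by (rule refl)
lemma ucA_raw: "uc A4pp = basisvec (0, False)"
  unfolding A4pp_def hopf_sc.select_convs by (rule refl)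
lemma ecA_raw: "ec A4pp = (\<lambda>(i, j). if j then 0 else 1)"
  unfolding A4pp_def hopf_sc.select_convs by (rule refl)
lemma scA_raw: "sc A4pp = (\<lambda>(i, j) (m, n).
            if \<not> j then (if m = - i \<and> n = False then 1 else 0)
            else (if m = - i - 1 \<and> n = True then (if odd4 i then -1 else 1) else 0))"
  unfolding A4pp_def hopf_sc.select_convs by (rule refl)
lemma Adual_sel: "mc Adual = (\<lambda>b1 b2 b. dc A4pp b b1 b2)" "uc Adual = ec A4pp"
   "dc Adual = (\<lambda>b b1 b2. mc A4pp b1 b2 b)" "ec Adual = uc A4pp" "sc Adual = (\<lambda>b b'. sc A4pp b' b)"
  unfolding Adual_def dual_hopf_def hopf_sc.select_convs by (rule refl)+
lemma mcT_raw: "mc Tsw = (\<lambda>(i, j) (k, l) (m, n).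
            if j \<and> l then 0
            else (if m = i + k \<and> n = (j \<or> l) then (if j \<and> k = 1 then -1 else 1) else 0))"
  unfolding Tsw_def hopf_sc.select_convs by (rule refl)
lemma ucT_raw: "uc Tsw = basisvec (0, False)"
  unfolding Tsw_def hopf_sc.select_convs by (rule refl)
lemma dcT_raw: "dc Tsw = (\<lambda>(i, j) (a, p) (c, q).
            if \<not> j then (if a = i \<and> p = False \<and> c = i \<and> q = False then 1 else 0)
            else (if a = i \<and> p = True \<and> c = i + 1 \<and> q = False then 1 else 0)
              + (if a = i \<and> p = False \<and> c = i \<and> q = True then 1 else 0))"
  unfolding Tsw_def hopf_sc.select_convs by (rule refl)
lemma ecT_raw: "ec Tsw = (\<lambda>(i, j). if j then 0 else 1)"
  unfolding Tsw_def hopf_sc.select_convs by (rule refl)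
lemma G_sel: "mc group_alg = (\<lambda>a b c. if c = a + b then 1 else 0)" "uc group_alg = basisvec 0"
  "dc group_alg = (\<lambda>a b c. if b = a \<and> c = a then 1 else 0)" "ec group_alg = (\<lambda>_. 1)"
  "sc group_alg = (\<lambda>a b. if b = - a then 1 else 0)"
  unfolding group_alg_def hopf_sc.select_convs by (rule refl)+

lemma dcA: "dc A4pp (m,n) b1 b2 = (if n then (if b2 = (m+1,False) then (if b1 = (m,True) then 1 else 0) else 0)
     + (if b2 = (m,True) then (if b1 = (m,False) then 1 else 0) else 0)
    else (if b2 = (m,False) then (if b1 = (m,False) then 1 else 0) else 0))"
  by (cases b1; cases b2) (auto simp: dcA_raw)

lemma mult_if0: "x * (if P then y else 0) = (if P then x * y else (0::'a::semiring_0))"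
  by simp

lemma hmult_A: "hmult (Adual::(4\<times>bool,'k::field) hopf_sc) u v (m,n) = (if n then u(m,True)*v(m+1,False) + u(m,False)*v(m,True) else u(m,False)*v(m,False))"
  by (cases n) (simp_all add: hmult_def Adual_sel dcA distrib_left sum.distrib mult_if0)

lemma mcA: "mc A4pp (i,j) (k,l) b = (if j\<and>l then sgn4 True k * ((if b = (i+k+2,False) then 1 else 0) - (if b = (i+k,False) then 1 else 0)) else (if b = (i+k, j\<or>l) then sgn4 j k else 0))"
  by (cases b) (auto simp: mcA_raw)

lemma hcomult_A: "hcomult (Adual::(4\<times>bool,'k::field) hopf_sc) u ((i,j),(k,l)) = (if j\<and>l then sgn4 True k * (u(i+k+2,False) - u(i+k,False)) else sgn4 j k * u(i+k, j\<or>l))"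
  by (cases j; cases l) (simp_all add: hcomult_def Adual_sel mcA right_diff_distrib sum_subtractf mult_if0 algebra_simps)

lemma hcounit_A: "hcounit (Adual::(4\<times>bool,'k::field) hopf_sc) u = u (0,False)"
  by (simp add: hcounit_def Adual_sel ucA_raw basisvec_def mult_if0)

lemma hone_A: "hone (Adual::(4\<times>bool,'k::field) hopf_sc) = (\<lambda>(i,j). if j then 0 else 1)"
  by (simp add: hone_def Adual_sel ecA_raw)

lemma scA: "sc A4pp (m,n) b = (if n then (if b = (-m-1,True) then (if odd4 m then -1 else 1) else 0) else (if b = (-m,False) then 1 else 0))"
  by (cases b) (auto simp: scA_raw)

lemma hantipode_A: "hantipode (Adual::(4\<times>bool,'k::field) hopf_sc) u (m,n) = (if n then (if odd4 m then -1 else 1) * u(-m-1,True) else u(-m,False))"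
  by (cases n) (simp_all add: hantipode_def Adual_sel scA mult_if0 algebra_simps)

lemma num4_simps[simp]: "(4::4) = 0" "(5::4) = 1" "(6::4) = 2" "(7::4) = 3" "(8::4) = 0"
  "(-1::4) = 3" "(-2::4) = 2" "(-3::4) = 1" "(-4::4) = 0" "(-5::4) = 3" "(-6::4) = 2" "(-7::4) = 1"
  "(2::2) = 0" "(3::2) = 1" "(-1::2) = 1" "(-2::2) = 0"
  by simp_all

definition Vset :: "(4\<times>bool \<Rightarrow> 'k::field) set" where
  "Vset = {h. \<forall>i j. h(i+2,j) = h(i,j)}"

lemma V_iff: "h \<in> Vset \<longleftrightarrow> h(2,False)=h(0,False) \<and> h(3,False)=h(1,False) \<and> h(2,True)=h(0,True) \<and> h(3,True)=h(1,True)"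
proof
  assume "h \<in> Vset"
  then have "\<And>i j. h(i+2,j) = h(i,j)" by (simp add: Vset_def)
  from this[of 0] this[of 1] show "h(2,False)=h(0,False) \<and> h(3,False)=h(1,False) \<and> h(2,True)=h(0,True) \<and> h(3,True)=h(1,True)"
    by simp
next
  assume H: "h(2,False)=h(0,False) \<and> h(3,False)=h(1,False) \<and> h(2,True)=h(0,True) \<and> h(3,True)=h(1,True)"
  have "h(i+2,j) = h(i,j)" for i j
    using four_cases[of i] H by (cases j) auto
  then show "h \<in> Vset" by (simp add: Vset_def)
qed

lemma odd4_simps[simp]: "odd4 0 = False" "odd4 1" "odd4 2 = False" "odd4 3"
  by (simp_all add: odd4_def)
lemma sgn4_simps[simp]: "sgn4 False k = 1" "sgn4 True 0 = 1" "sgn4 True 1 = -1" "sgn4 True 2 = 1" "sgn4 True 3 = -1"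
  by (simp_all add: sgn4_def)

lemma lsub_V: "lsubspace Vset"
  by (simp add: lsubspace_def Vset_def)

lemma hone_V: "hone Adual \<in> Vset"
  by (simp add: V_iff hone_A)

lemma mult_V: "u \<in> Vset \<Longrightarrow> v \<in> Vset \<Longrightarrow> hmult Adual u v \<in> Vset"
  by (simp add: V_iff hmult_A)

lemma antipode_V: "u \<in> Vset \<Longrightarrow> hantipode Adual u \<in> Vset"
  by (simp add: V_iff hantipode_A)

lemma lspan_base: "x \<in> S \<Longrightarrow> x \<in> lspan S"
  unfolding lspan_def
  apply (rule CollectI, rule exI[of _ "{x}"], rule exI[of _ "\<lambda>_. 1"])
  by auto
lemma lspan_add: assumes "x \<in> lspan S" "y \<in> lspan S" shows "(\<lambda>z. x z + y z) \<in> lspan S"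
proof -
  obtain F1 c1 where 1: "finite F1" "F1 \<subseteq> S" "x = (\<lambda>z. \<Sum>u\<in>F1. c1 u * u z)" using assms(1) unfolding lspan_def by blast
  obtain F2 c2 where 2: "finite F2" "F2 \<subseteq> S" "y = (\<lambda>z. \<Sum>u\<in>F2. c2 u * u z)" using assms(2) unfolding lspan_def by blast
  define c where "c u = (if u \<in> F1 then c1 u else 0) + (if u \<in> F2 then c2 u else 0)" for u
  have eq: "x z + y z = (\<Sum>u\<in>F1 \<union> F2. c u * u z)" for z
  proof -
    have cu: "c u * u z = (if u \<in> F1 then c1 u * u z else 0) + (if u \<in> F2 then c2 u * u z else 0)" for u
      by (simp add: c_def distrib_right)
    have "(\<Sum>u\<in>F1 \<union> F2. c u * u z) = (\<Sum>u\<in>F1 \<union> F2. (if u \<in> F1 then c1 u * u z else 0)) + (\<Sum>u\<in>F1 \<union> F2. (if u \<in> F2 then c2 u * u z else 0))"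
      by (simp only: cu sum.distrib)
    also have "\<dots> = (\<Sum>u\<in>(F1 \<union> F2) \<inter> F1. c1 u * u z) + (\<Sum>u\<in>(F1 \<union> F2) \<inter> F2. c2 u * u z)"
      using 1(1) 2(1) by (simp only: sum.inter_restrict finite_UnI)
    also have "\<dots> = (\<Sum>u\<in>F1. c1 u * u z) + (\<Sum>u\<in>F2. c2 u * u z)"
      by (simp add: Int_absorb1 Int_absorb2)
    finally show ?thesis using 1(3) 2(3) by simp
  qed
  show ?thesis unfolding lspan_def
    apply (intro CollectI exI[of _ "F1 \<union> F2"] exI[of _ c])
    using 1(1,2) 2(1,2) eq by auto
qed

lemma lspan_scale: assumes "x \<in> lspan S" shows "(\<lambda>z. a * x z) \<in> lspan S"
proof -
  obtain F1 c1 where 1: "finite F1" "F1 \<subseteq> S" "x = (\<lambda>z. \<Sum>u\<in>F1. c1 u * u z)" using assms(1) unfolding lspan_def by blast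
  have "(\<lambda>z. a * x z) = (\<lambda>z. \<Sum>u\<in>F1. (a * c1 u) * u z)" unfolding 1(3) by (simp only: sum_distrib_left mult.assoc)
  then show ?thesis unfolding lspan_def
    apply (intro CollectI exI[of _ F1] exI[of _ "\<lambda>u. a * c1 u"])
    using 1(1,2) by simp
qed
lemma lsub_add: "lsubspace K \<Longrightarrow> u \<in> K \<Longrightarrow> v \<in> K \<Longrightarrow> (\<lambda>x. u x + v x) \<in> K"
  unfolding lsubspace_def by blast
lemma lsub_scale: "lsubspace K \<Longrightarrow> u \<in> K \<Longrightarrow> (\<lambda>x. c * u x) \<in> K"
  unfolding lsubspace_def by blast
lemma lsub_zero: "lsubspace K \<Longrightarrow> (\<lambda>x. 0) \<in> K"
  unfolding lsubspace_def by blast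

lemma lspan_in_subspace: assumes "lsubspace K" "S \<subseteq> K" shows "lspan S \<subseteq> K"
proof
  fix v assume "v \<in> lspan S"
  then obtain F c where F: "finite F" "F \<subseteq> S" "v = (\<lambda>z. \<Sum>u\<in>F. c u * u z)" unfolding lspan_def by blast
  have "F \<subseteq> S \<Longrightarrow> (\<lambda>z. \<Sum>u\<in>F. c u * u z) \<in> K" using F(1)
  proof (induct F rule: finite_induct)
    case empty then show ?case using lsub_zero[OF assms(1)] by simp
  next
    case (insert x F)
    then have a: "(\<lambda>z. c x * x z) \<in> K" using assms by (intro lsub_scale) auto
    have b: "(\<lambda>z. \<Sum>u\<in>F. c u * u z) \<in> K" using insert by auto
    have "(\<lambda>z. \<Sum>u\<in>insert x F. c u * u z) = (\<lambda>z. c x * x z + (\<Sum>u\<in>F. c u * u z))"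
      using insert(1,2) by simp
    then show ?case using lsub_add[OF assms(1) a b] by simp
  qed
  then show "v \<in> K" using F by simp
qed

definition fV :: "4 \<Rightarrow> bool \<Rightarrow> 4\<times>bool \<Rightarrow> 'k::field" where
  "fV r j = (\<lambda>(i,j'). if j' = j \<and> (i = r \<or> i = r + 2) then 1 else 0)"

lemma fV_V: "fV 0 j \<in> Vset" "fV 1 j \<in> Vset"
  by (simp_all add: V_iff fV_def)

lemma comult_L: assumes u: "u \<in> Vset" shows "(\<lambda>d. hcomult Adual u ((r,j),d)) \<in> Vset"
  using u four_cases[of r] by (cases j) (auto simp: V_iff hcomult_A)


lemma comult_pt: assumes u: "u \<in> Vset"
  shows "hcomult Adual u ((i,j),(k,l)) = tens (fV 0 False) (\<lambda>d. hcomult Adual u ((0,False),d)) ((i,j),(k,l))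
     + tens (fV 0 True) (\<lambda>d. hcomult Adual u ((0,True),d)) ((i,j),(k,l))
     + tens (fV 1 False) (\<lambda>d. hcomult Adual u ((1,False),d)) ((i,j),(k,l))
     + tens (fV 1 True) (\<lambda>d. hcomult Adual u ((1,True),d)) ((i,j),(k,l))"
  using u four_cases[of i] four_cases[of k] unfolding V_iff
  by (elim conjE disjE; cases j; cases l; simp add: hcomult_A tens_def fV_def)

lemma comult_V: assumes u: "u \<in> Vset" shows "hcomult Adual u \<in> lspan {tens v w | v w. v \<in> Vset \<and> w \<in> Vset}"
proof -
  let ?L = "\<lambda>b. (\<lambda>d. hcomult Adual u (b,d))"
  have eq: "hcomult Adual u = (\<lambda>z. (\<lambda>z. (\<lambda>z. tens (fV 0 False) (?L (0,False)) z + tens (fV 0 True) (?L (0,True)) z) z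
      + tens (fV 1 False) (?L (1,False)) z) z + tens (fV 1 True) (?L (1,True)) z)"
  proof (rule ext)
    fix z :: "(4\<times>bool)\<times>(4\<times>bool)"
    obtain i j k l where z: "z = ((i,j),(k,l))" by (metis prod.collapse)
    show "hcomult Adual u z = (\<lambda>z. (\<lambda>z. (\<lambda>z. tens (fV 0 False) (?L (0,False)) z + tens (fV 0 True) (?L (0,True)) z) z
      + tens (fV 1 False) (?L (1,False)) z) z + tens (fV 1 True) (?L (1,True)) z) z"
      unfolding z by (subst comult_pt[OF u]) (rule refl)
  qed
  let ?S = "{tens v w | v w. v \<in> Vset \<and> w \<in> Vset}"
  have m: "tens (fV r j) (?L (r, j)) \<in> lspan ?S" if "r = 0 \<or> r = 1" for r j
    apply (rule lspan_base, rule CollectI, rule exI[of _ "fV r j"], rule exI[of _ "?L (r,j)"])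
    apply (intro conjI refl)
    using that fV_V apply blast
    by (rule comult_L[OF u])
  show ?thesis
    apply (subst eq)
    by (intro lspan_add m) simp_all
qed

lemma hopf_subalg_V: "hopf_subalg Adual (Vset::(4\<times>bool\<Rightarrow>'k::field) set)"
  unfolding hopf_subalg_def using lsub_V hone_V mult_V antipode_V comult_V by blast

lemma imag_sq: "(imag::'k::alg_closed_field) * imag = -1"
proof -
  have "\<exists>x::'k. (\<Sum>k\<le>2. (\<lambda>k. if k = 1 then 0 else 1) k * x ^ k) = 0"
    by (rule alg_closed) simp_all
  then obtain x :: 'k where "(\<Sum>k\<le>2. (\<lambda>k. if k = (1::nat) then 0 else 1) k * x ^ k) = 0" by blast
  then have "1 + x * x = 0" by (simp add: numeral_2_eq_2 power2_eq_square)
  then have "x * x = -1" by (simp add: eq_neg_iff_add_eq_0 add.commute)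
  then show ?thesis unfolding imag_def by (rule someI)
qed

lemma mpow_rho_g: "mpow rho_g n r c = (if r \<noteq> c then 0 else if r = False then imag^n else (-imag)^n)"
  by (induct n arbitrary: r c) (auto simp: mid_def mmul_def sumbool rho_g_def)

lemma ecoord_eq: "ecoord r c (i,j) = mpow rho_g (nat (Rep_bit0 i)) r r * (if j then rho_x r c else mid r c)"
  by (simp add: ecoord_def rho_def mmul_def sumbool mpow_rho_g)

lemma y_eq: "hmult Adual (e11::4\<times>bool\<Rightarrow>'k::alg_closed_field) e21 = (\<lambda>(i,j). if j then -1 else 0)"
proof (rule ext, clarify)
  fix m :: 4 and n :: bool
  have k: "(imag::'k) ^ q * (-imag) ^ q = 1" for q
  proof -
    have "(imag::'k) ^ q * (-imag) ^ q = (imag * (-imag))^q" by (rule power_mult_distrib[symmetric])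
    also have "imag * (-imag) = (1::'k)" using imag_sq[where 'k='k] by simp
    finally show ?thesis by simp
  qed
  show "hmult Adual (e11::4\<times>bool\<Rightarrow>'k) e21 (m,n) = (if n then -1 else 0)"
    by (cases n) (simp_all add: hmult_A e11_def e21_def ecoord_eq mpow_rho_g rho_x_def mid_def k)
qed

lemma alpha_V: "alpha \<in> Vset"
  by (simp add: V_iff alpha_def)

lemma y_V: "(\<lambda>(i,j). if j then -1 else (0::'k::field)) \<in> Vset"
  by (simp add: V_iff)

lemma V_sub_K:
  assumes K: "hopf_subalg Adual K" and a: "alpha \<in> K" and y: "(\<lambda>(i,j). if j then -1 else (0::'k::field_char_0)) \<in> K"
    and h: "h \<in> Vset"
  shows "h \<in> K"
proof -
  let ?y = "(\<lambda>(i,j). if j then -1 else (0::'k))"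
  have sub: "lsubspace K" and one: "hone Adual \<in> K" using K by (auto simp: hopf_subalg_def)
  have ay: "hmult Adual alpha ?y \<in> K" using K a y by (auto simp: hopf_subalg_def)
  define a0 where "a0 = (h(0,False) + h(1,False))/2"
  define b0 where "b0 = (h(0,False) - h(1,False))/2"
  define c0 where "c0 = - (h(0,True) + h(1,True))/2"
  define d0 where "d0 = (h(1,True) - h(0,True))/2"
  have pt: "h (i,j) = a0 * hone Adual (i,j) + b0 * alpha (i,j) + c0 * ?y (i,j) + d0 * hmult Adual alpha ?y (i,j)" for i j
      using h four_cases[of i] unfolding V_iff
      by (cases j; elim conjE disjE) (simp_all add: hone_A hmult_A alpha_def a0_def b0_def c0_def d0_def field_simps)
  have eq: "h = (\<lambda>x. (\<lambda>x. (\<lambda>x. a0 * hone Adual x + b0 * alpha x) x + c0 * ?y x) x + d0 * hmult Adual alpha ?y x)"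
    apply (rule ext) subgoal for x using pt[of "fst x" "snd x"] by (cases x) simp done
  show ?thesis
    apply (subst eq)
    by (intro lsub_add[OF sub] lsub_scale[OF sub] one a y ay)
qed

lemma T_eq: "hopf_gen Adual {alpha, hmult Adual e11 e21} = (Vset::(4\<times>bool\<Rightarrow>'k::{alg_closed_field,field_char_0}) set)"
proof
  show "hopf_gen Adual {alpha, hmult Adual e11 e21} \<subseteq> (Vset::(4\<times>bool\<Rightarrow>'k) set)"
    unfolding hopf_gen_def y_eq using hopf_subalg_V alpha_V y_V by (intro Inter_lower) auto
  show "(Vset::(4\<times>bool\<Rightarrow>'k) set) \<subseteq> hopf_gen Adual {alpha, hmult Adual e11 e21}"
    unfolding hopf_gen_def y_eq using V_sub_K by blast
qed

definition psi :: "(4\<times>bool \<Rightarrow> 'k::field) \<Rightarrow> (2 \<Rightarrow> 'k)" where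
  "psi u = (\<lambda>t. if t = 0 then (u(0,False) + u(2,False))/2 else (u(0,False) - u(2,False))/2)"

lemma tmap_id: "tmap (\<lambda>u. u) f w (b1,t) = (\<Sum>d\<in>UNIV. w(b1,d) * f (basisvec d) t)"
proof -
  have "tmap (\<lambda>u. u) f w (b1,t) = (\<Sum>b\<in>UNIV. \<Sum>d\<in>UNIV. w(b,d) * basisvec b b1 * f (basisvec d) t)"
    by (simp add: tmap_def sum_prodU)
  also have "\<dots> = (\<Sum>b\<in>UNIV. if b = b1 then (\<Sum>d\<in>UNIV. w(b1,d) * f (basisvec d) t) else 0)"
    by (rule sum.cong) (auto simp: basisvec_def)
  finally show ?thesis by simp
qed

lemma psi_lin: "is_linear psi"
  unfolding is_linear_def
  by (auto intro!: ext simp: psi_def add_divide_distrib diff_divide_distrib algebra_simps)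

lemma psi_basis: "psi (basisvec b) t = (if b = (0,False) then 1/2 else if b = (2,False) then (if t = 0 then 1/2 else -1/2) else (0::'k::field))"
  by (auto simp: psi_def basisvec_def)

lemma hmult_G: "hmult (group_alg::(2,'k::field) hopf_sc) p q c = (if c = 0 then p 0 * q 0 + p 1 * q 1 else p 0 * q 1 + p 1 * q 0)"
  using two_cases[of c] by (auto simp: hmult_def G_sel sum2)

lemma hcomult_G: "hcomult (group_alg::(2,'k::field) hopf_sc) w (a,b) = (if a = b then w a else 0)"
  using two_cases[of a] two_cases[of b] by (auto simp: hcomult_def G_sel sum2)

lemma hcounit_G: "hcounit (group_alg::(2,'k::field) hopf_sc) w = w 0 + w 1"
  by (simp add: hcounit_def G_sel sum2)

lemma hone_G: "hone (group_alg::(2,'k::field) hopf_sc) = basisvec 0"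
  by (simp add: hone_def G_sel)

lemma psi_mor: "hopf_mor (Adual::(4\<times>bool,'k::field_char_0) hopf_sc) group_alg psi"
  unfolding hopf_mor_def
proof (intro conjI allI psi_lin)
  fix u v :: "4\<times>bool \<Rightarrow> 'k"
  show "psi (hmult Adual u v) = hmult group_alg (psi u) (psi v)"
    apply (rule ext) subgoal for c using two_cases[of c]
      by (auto simp: hmult_G psi_def hmult_A field_simps) done
  show "psi (hone (Adual::(4\<times>bool,'k) hopf_sc)) = hone group_alg"
    apply (rule ext) subgoal for c using two_cases[of c]
      by (auto simp: hone_G psi_def hone_A basisvec_def) done
  show "hcomult group_alg (psi u) = tmap psi psi (hcomult Adual u)"
    apply (rule ext) subgoal for z
      apply (cases z) subgoal for a b using two_cases[of a] two_cases[of b]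
        apply (simp only: tmap_def psi_basis split_def fst_conv snd_conv)
        by (auto simp: hcomult_G sum_prodU sum4 sumbool hcomult_A psi_def field_simps) done done
  show "hcounit group_alg (psi u) = hcounit Adual u"
    by (simp add: hcounit_G hcounit_A psi_def field_simps)
qed

lemma sgn4_02[simp]: "sgn4 j 0 = 1" "sgn4 j 2 = 1"
  by (simp_all add: sgn4_def)

lemma coinv_pt: "tmap (\<lambda>u. u) psi (hcomult (Adual::(4\<times>bool,'k::field) hopf_sc) h) ((i,j),t) = (if t = 0 then (h(i,j) + h(i+2,j))/2 else (h(i,j) - h(i+2,j))/2)"
  by (simp add: tmap_id sum4b psi_basis hcomult_A field_simps)

lemma coinv_V: "coinv Adual group_alg psi = (Vset::(4\<times>bool\<Rightarrow>'k::field_char_0) set)"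
proof
  show "coinv Adual group_alg psi \<subseteq> (Vset::(4\<times>bool\<Rightarrow>'k) set)"
  proof
    fix h :: "4\<times>bool\<Rightarrow>'k" assume "h \<in> coinv Adual group_alg psi"
    then have H: "tmap (\<lambda>u. u) psi (hcomult Adual h) = tens h (hone group_alg)" by (simp add: coinv_def)
    have "h(i+2,j) = h(i,j)" for i j
    proof -
      have "tmap (\<lambda>u. u) psi (hcomult Adual h) ((i,j),(1::2)) = tens h (hone group_alg) ((i,j),(1::2))" using H by simp
      then show ?thesis by (simp add: coinv_pt tens_def hone_G basisvec_def)
    qed
    then show "h \<in> Vset" by (simp add: Vset_def)
  qed
  show "(Vset::(4\<times>bool\<Rightarrow>'k) set) \<subseteq> coinv Adual group_alg psi"
  proof
    fix h :: "4\<times>bool\<Rightarrow>'k" assume "h \<in> Vset"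
    then have V: "h(i+2,j) = h(i,j)" for i j by (simp add: Vset_def)
    have "tmap (\<lambda>u. u) psi (hcomult Adual h) = tens h (hone group_alg)"
    proof (rule ext, clarify)
      fix i j and t :: 2
      show "tmap (\<lambda>u. u) psi (hcomult Adual h) ((i,j),t) = tens h (hone group_alg) ((i,j),t)"
        using two_cases[of t] by (auto simp: coinv_pt V tens_def hone_G basisvec_def)
    qed
    then show "h \<in> coinv Adual group_alg psi" by (simp add: coinv_def)
  qed
qed

lemma psi_surj: "surj (psi::(4\<times>bool \<Rightarrow> 'k::field_char_0) \<Rightarrow> _)"
proof (rule surjI)
  fix p :: "2 \<Rightarrow> 'k"
  show "psi (\<lambda>(i,j). if j then 0 else if i = 0 then p 0 + p 1 else if i = 2 then p 0 - p 1 else 0) = p"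
    apply (rule ext) subgoal for t using two_cases[of t] by (auto simp: psi_def) done
qed

lemma psi_V: "(t::4\<times>bool\<Rightarrow>'k::field_char_0) \<in> Vset \<Longrightarrow> psi t = (\<lambda>c. hcounit Adual t * hone group_alg c)"
  by (rule ext) (auto simp: psi_def V_iff hcounit_A hone_G basisvec_def)

lemma psi_zero_iff: "psi (u::4\<times>bool\<Rightarrow>'k::field_char_0) = (\<lambda>_. 0) \<longleftrightarrow> u(0,False) = 0 \<and> u(2,False) = 0"
proof
  assume "psi u = (\<lambda>_. 0)"
  then have "psi u 0 = 0" "psi u 1 = 0" by auto
  then have "u(0,False) + u(2,False) = 0" "u(0,False) - u(2,False) = 0" by (simp_all add: psi_def)
  then have "(u(0,False) + u(2,False)) + (u(0,False) - u(2,False)) = 0" by simp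
  then have "2 * u(0,False) = 0" by (simp add: algebra_simps)
  then have "u(0,False) = 0" by simp
  with \<open>u(0,False) + u(2,False) = 0\<close> show "u(0,False) = 0 \<and> u(2,False) = 0" by simp
next
  assume "u(0,False) = 0 \<and> u(2,False) = 0"
  then show "psi u = (\<lambda>_. 0)" by (intro ext) (simp add: psi_def)
qed

lemma ker_sub: "lsubspace {u::4\<times>bool\<Rightarrow>'k::field_char_0. psi u = (\<lambda>_. 0)}"
  unfolding lsubspace_def psi_zero_iff by auto

lemma psi_ker: "{u. psi u = (\<lambda>_. 0)} = lspan {hmult Adual t a | t a. t \<in> (Vset::(4\<times>bool\<Rightarrow>'k::field_char_0) set) \<and> hcounit Adual t = 0}"
proof
  let ?S = "{hmult Adual t a | t a. t \<in> (Vset::(4\<times>bool\<Rightarrow>'k) set) \<and> hcounit Adual t = 0}"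
  show "lspan ?S \<subseteq> {u. psi u = (\<lambda>_. 0)}"
  proof (rule lspan_in_subspace[OF ker_sub])
    show "?S \<subseteq> {u. psi u = (\<lambda>_. 0)}"
      by (auto simp: psi_zero_iff hmult_A V_iff hcounit_A)
  qed
  show "{u. psi u = (\<lambda>_. 0)} \<subseteq> lspan ?S"
  proof
    fix u :: "4\<times>bool\<Rightarrow>'k" assume "u \<in> {u. psi u = (\<lambda>_. 0)}"
    then have u0: "u(0,False) = 0" "u(2,False) = 0" by (auto simp: psi_zero_iff)
    define t1 :: "4\<times>bool\<Rightarrow>'k" where "t1 = (\<lambda>(i,j). if \<not> j \<and> (i = 1 \<or> i = 3) then 1 else 0)"
    define a1 :: "4\<times>bool\<Rightarrow>'k" where "a1 = (\<lambda>(i,j). if j then 0 else u(i,False))"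
    define t2 :: "4\<times>bool\<Rightarrow>'k" where "t2 = (\<lambda>(i,j). if j then 1 else 0)"
    define a2 :: "4\<times>bool\<Rightarrow>'k" where "a2 = (\<lambda>(k,j). if j then 0 else u(k-1,True))"
    have pt: "u (i,j) = hmult Adual t1 a1 (i,j) + hmult Adual t2 a2 (i,j)" for i j
      using four_cases[of i] u0 by (cases j) (auto simp: hmult_A t1_def a1_def t2_def a2_def)
    have eq: "u = (\<lambda>z. hmult Adual t1 a1 z + hmult Adual t2 a2 z)"
      apply (rule ext) subgoal for z using pt[of "fst z" "snd z"] by simp done
    have m1: "hmult Adual t1 a1 \<in> ?S"
      by (rule CollectI, rule exI[of _ t1], rule exI[of _ a1]) (simp add: t1_def V_iff hcounit_A)
    have m2: "hmult Adual t2 a2 \<in> ?S"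
      by (rule CollectI, rule exI[of _ t2], rule exI[of _ a2]) (simp add: t2_def V_iff hcounit_A)
    show "u \<in> lspan ?S"
      apply (subst eq)
      by (intro lspan_add lspan_base m1 m2)
  qed
qed

lemma part2: "exact_seq_incl (Adual :: (4 \<times> bool, 'k::field_char_0) hopf_sc) Vset (group_alg :: (2, 'k) hopf_sc) psi"
  unfolding exact_seq_incl_def
  using hopf_subalg_V psi_mor psi_surj psi_V psi_ker coinv_V by blast

lemma lin_zero: "is_linear f \<Longrightarrow> f (\<lambda>x. 0) = (\<lambda>y. 0)"
proof -
  assume f: "is_linear f"
  have "f (\<lambda>x. 0 * u x) = (\<lambda>y. 0 * f u y)" for u using f unfolding is_linear_def by blast
  from this[of "\<lambda>x. 0"] show ?thesis by simp
qed

lemma lin_sum: assumes f: "is_linear f" and F: "finite F"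
  shows "f (\<lambda>x. \<Sum>a\<in>F. c a * g a x) = (\<lambda>y. \<Sum>a\<in>F. c a * f (g a) y)"
  using F
proof (induct F rule: finite_induct)
  case empty then show ?case using lin_zero[OF f] by simp
next
  case (insert a F)
  have add: "f (\<lambda>x. u x + v x) = (\<lambda>y. f u y + f v y)" for u v using f unfolding is_linear_def by blast
  have sc: "f (\<lambda>x. c * u x) = (\<lambda>y. c * f u y)" for c u using f unfolding is_linear_def by blast
  have "f (\<lambda>x. \<Sum>a\<in>insert a F. c a * g a x) = f (\<lambda>x. (\<lambda>x. c a * g a x) x + (\<lambda>x. \<Sum>a\<in>F. c a * g a x) x)"
    using insert(1,2) by simp
  also have "\<dots> = (\<lambda>y. c a * f (g a) y + (\<Sum>a\<in>F. c a * f (g a) y))"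
    by (simp only: add sc insert(3))
  finally show ?case using insert(1,2) by simp
qed

lemma lin_expand: assumes f: "is_linear (f::('b::finite \<Rightarrow> 'k::field) \<Rightarrow> _)"
  shows "f u = (\<lambda>t. \<Sum>a\<in>UNIV. u a * f (basisvec a) t)"
proof -
  have "u = (\<lambda>x. \<Sum>a\<in>UNIV. u a * basisvec a x)"
    by (rule ext) (simp add: basisvec_def mult_if0 if_distrib[of "\<lambda>x. _ * x"] cong: if_cong)
  then have "f u = f (\<lambda>x. \<Sum>a\<in>UNIV. u a * basisvec a x)" by simp
  also have "\<dots> = (\<lambda>t. \<Sum>a\<in>UNIV. u a * f (basisvec a) t)" by (rule lin_sum[OF f]) simp
  finally show ?thesis .
qed

lemma hmult_T: "hmult (Tsw::(2\<times>bool,'k::field) hopf_sc) p q (k,n) = (if n then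
     (if k = 0 then p(0,False)*q(0,True) + p(1,False)*q(1,True) + p(0,True)*q(0,False) - p(1,True)*q(1,False)
      else p(0,False)*q(1,True) + p(1,False)*q(0,True) - p(0,True)*q(1,False) + p(1,True)*q(0,False))
   else (if k = 0 then p(0,False)*q(0,False) + p(1,False)*q(1,False) else p(0,False)*q(1,False) + p(1,False)*q(0,False)))"
  using two_cases[of k] by (cases n) (auto simp: hmult_def mcT_raw sum2b)

lemma hcomult_T: "hcomult (Tsw::(2\<times>bool,'k::field) hopf_sc) w ((a,p),(c,q)) =
   (if \<not>p \<and> \<not>q then (if a = c then w(a,False) else 0) else if p \<and> \<not>q then (if c = a+1 then w(a,True) else 0)
    else if \<not>p \<and> q then (if c = a then w(a,True) else 0) else 0)"
  using two_cases[of a] two_cases[of c] by (cases p; cases q) (auto simp: hcomult_def dcT_raw sum2b)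

lemma hcounit_T: "hcounit (Tsw::(2\<times>bool,'k::field) hopf_sc) w = w(0,False) + w(1,False)"
  by (simp add: hcounit_def ecT_raw sum2b)

lemma hone_T: "hone (Tsw::(2\<times>bool,'k::field) hopf_sc) = basisvec (0,False)"
  by (simp add: hone_def ucT_raw)

lemma mult_if0': "(if P then y else 0) * x = (if P then y * x else (0::'a::semiring_0))"
  by simp

lemma dcB: "dc A4pp b (a,p) (c,q) = (if \<not>p \<and> \<not>q then (if a = c then (if b = (a,False) then 1 else 0) else 0)
   else if p \<and> \<not>q then (if c = a+1 then (if b = (a,True) then 1 else 0) else 0)
   else if \<not>p \<and> q then (if c = a then (if b = (a,True) then 1 else 0) else 0) else 0)"
  by (cases b) (auto simp: dcA_raw)

lemma dc_sum: "(\<Sum>b\<in>UNIV. dc A4pp b (a,p) (c,q) * f b) = (if \<not>p \<and> \<not>q then (if a = c then f(a,False) else 0)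
   else if p \<and> \<not>q then (if c = a+1 then f(a,True) else 0) else if \<not>p \<and> q then (if c = a then f(a,True) else 0) else (0::'k::field))"
  by (cases p; cases q) (simp_all add: dcB mult_if0' if_distrib[of "\<lambda>x. x * _"] cong: if_cong)

definition prodA :: "(4\<times>bool \<Rightarrow> 'k::field) \<Rightarrow> (4\<times>bool \<Rightarrow> 'k) \<Rightarrow> 4\<times>bool \<Rightarrow> 'k" where
  "prodA f g a = (\<Sum>(b,d)\<in>UNIV. mc A4pp b d a * f b * g d)"

lemma prodA_0F: assumes "\<And>i. f(i,True) = 0" "\<And>i. g(i,True) = 0"
  shows "prodA f g (0,False) = f(0,False)*g(0,False) + f(1,False)*g(3,False) + f(2,False)*g(2,False) + f(3,False)*g(1,False)"
  by (simp add: prodA_def sum_prodU sum4 sumbool mcA_raw assms)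

lemma prodA_2F: assumes "\<And>i. f(i,True) = 0" "\<And>i. g(i,True) = 0"
  shows "prodA f g (2,False) = f(0,False)*g(2,False) + f(1,False)*g(1,False) + f(2,False)*g(0,False) + f(3,False)*g(3,False)"
  by (simp add: prodA_def sum_prodU sum4 sumbool mcA_raw assms)

lemma sum_if_const: "(\<Sum>x\<in>A. if P then f x else 0) = (if P then (\<Sum>x\<in>A. f x) else (0::'a::comm_monoid_add))"
  by auto

lemma if1_mult: "(if P then 1 else 0) * x = (if P then x else (0::'a::semiring_1))"
  by simp

lemma hmult_A_basis: "hmult Adual (basisvec a1) (basisvec a2) = (\<lambda>b. dc A4pp b a1 a2 :: 'k::field)"
  by (rule ext) (simp add: hmult_def Adual_sel basisvec_def mult_if0' sum_if_const cong: if_cong)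

lemma hcomult_A_basis: "hcomult Adual (basisvec a) = (\<lambda>(b,d). mc A4pp b d a :: 'k::field)"
  by (rule ext) (simp add: hcomult_def Adual_sel basisvec_def if1_mult split: prod.split)

lemma prodA_add1: "prodA (\<lambda>b. f b + g b) h a = prodA f h a + prodA g h a"
  by (simp add: prodA_def distrib_left distrib_right sum.distrib split_def)
lemma prodA_add2: "prodA h (\<lambda>b. f b + g b) a = prodA h f a + prodA h g a"
  by (simp add: prodA_def distrib_left distrib_right sum.distrib split_def)
lemma prodA_diff1: "prodA (\<lambda>b. f b - g b) h a = prodA f h a - prodA g h a"
  by (simp add: prodA_def right_diff_distrib left_diff_distrib sum_subtractf split_def)
lemma prodA_diff2: "prodA h (\<lambda>b. f b - g b) a = prodA h f a - prodA h g a"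
  by (simp add: prodA_def right_diff_distrib left_diff_distrib sum_subtractf split_def)
lemma prodA_zero2: "prodA h (\<lambda>b. 0) a = 0"
  by (simp add: prodA_def)

lemma pi_struct:
  fixes p :: "(4\<times>bool \<Rightarrow> 'k::field_char_0) \<Rightarrow> (2\<times>bool \<Rightarrow> 'k)"
  assumes H: "hopf_mor Adual Tsw p"
  shows "(\<forall>a k. p (basisvec a) (k,True) = 0) \<and> (\<exists>g0 g2. g0 + g2 = 1 \<and>
     (\<forall>a. p (basisvec a) (0,False) = (basisvec (0,False) a + g0 * basisvec (0,False) a + g2 * basisvec (2,False) a)/2) \<and>
     (\<forall>a. p (basisvec a) (1,False) = (basisvec (0,False) a - g0 * basisvec (0,False) a - g2 * basisvec (2,False) a)/2))"
proof -
  define M where "M a t = p (basisvec a) t" for a t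
  have lin: "is_linear p" and mult: "\<And>u v. p (hmult Adual u v) = hmult Tsw (p u) (p v)"
    and cou: "\<And>u. hcounit Tsw (p u) = hcounit Adual u"
    and com: "\<And>u. hcomult Tsw (p u) = tmap p p (hcomult Adual u)"
    using H unfolding hopf_mor_def by blast+
  have exp: "p u t = (\<Sum>a\<in>UNIV. u a * M a t)" for u t
    using lin_expand[OF lin, of u] unfolding M_def by simp
  have Meq: "M a = p (basisvec a)" for a by (rule ext) (simp add: M_def)
  have E1: "M a (0,False) + M a (1,False) = basisvec (0,False) a" for a
    using cou[of "basisvec a"] unfolding M_def by (simp add: hcounit_T hcounit_A basisvec_def eq_commute)
  have E2: "(\<Sum>b\<in>UNIV. dc A4pp b a1 a2 * M b t) = hmult Tsw (\<lambda>t. M a1 t) (\<lambda>t. M a2 t) t" for a1 a2 t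
  proof -
    have "p (hmult Adual (basisvec a1) (basisvec a2)) t = hmult Tsw (p (basisvec a1)) (p (basisvec a2)) t"
      using mult by simp
    then have "p (\<lambda>b. dc A4pp b a1 a2) t = hmult Tsw (p (basisvec a1)) (p (basisvec a2)) t"
      by (simp only: hmult_A_basis)
    then show ?thesis using exp[of "\<lambda>b. dc A4pp b a1 a2" t] by (simp add: Meq)
  qed
  have E3: "hcomult Tsw (\<lambda>t. M a t) (t1,t2) = prodA (\<lambda>b. M b t1) (\<lambda>d. M d t2) a" for a t1 t2
  proof -
    have "hcomult Tsw (p (basisvec a)) (t1,t2) = tmap p p (hcomult Adual (basisvec a)) (t1,t2)"
      using com by simp
    then show ?thesis unfolding hcomult_A_basis tmap_def prodA_def by (simp add: Meq)
  qed
  define \<gamma> where "\<gamma> a = M a (0,False) - M a (1,False)" for a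
  define Z where "Z a = M a (0,True) + M a (1,True)" for a
  have G: "(\<Sum>b\<in>UNIV. dc A4pp b a1 a2 * \<gamma> b) = \<gamma> a1 * \<gamma> a2" for a1 a2
  proof -
    have "(\<Sum>b\<in>UNIV. dc A4pp b a1 a2 * \<gamma> b) = (\<Sum>b\<in>UNIV. dc A4pp b a1 a2 * M b (0,False)) - (\<Sum>b\<in>UNIV. dc A4pp b a1 a2 * M b (1,False))"
      by (simp add: \<gamma>_def right_diff_distrib sum_subtractf)
    also have "\<dots> = \<gamma> a1 * \<gamma> a2" unfolding E2 by (simp add: hmult_T \<gamma>_def algebra_simps)
    finally show ?thesis .
  qed
  have ZS: "(\<Sum>b\<in>UNIV. dc A4pp b a1 a2 * Z b) = basisvec (0,False) a1 * Z a2 + Z a1 * \<gamma> a2" for a1 a2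
  proof -
    have "(\<Sum>b\<in>UNIV. dc A4pp b a1 a2 * Z b) = (\<Sum>b\<in>UNIV. dc A4pp b a1 a2 * M b (0,True)) + (\<Sum>b\<in>UNIV. dc A4pp b a1 a2 * M b (1,True))"
      by (simp add: Z_def distrib_left sum.distrib)
    also have "\<dots> = (M a1 (0,False) + M a1 (1,False)) * Z a2 + Z a1 * \<gamma> a2" unfolding E2 by (simp add: hmult_T \<gamma>_def Z_def algebra_simps)
    finally show ?thesis unfolding E1 .
  qed
  have QQ: "prodA (\<lambda>b. M b (i,True)) (\<lambda>d. M d (k,True)) a = 0" for i k a
    using E3[of a "(i,True)" "(k,True)"] by (simp add: hcomult_T)
  have PP: "prodA (\<lambda>b. M b (i,False)) (\<lambda>d. M d (k,False)) a = (if i = k then M a (i,False) else 0)" for i k a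
    using E3[of a "(i,False)" "(k,False)"] by (simp add: hcomult_T)
  have PQ: "prodA (\<lambda>b. M b (i,False)) (\<lambda>d. M d (k,True)) a = (if k = i then M a (i,True) else 0)" for i k a
    using E3[of a "(i,False)" "(k,True)"] by (simp add: hcomult_T)
  have GG: "prodA \<gamma> \<gamma> a = basisvec (0,False) a" for a
  proof -
    have "prodA \<gamma> \<gamma> a = prodA (\<lambda>b. M b (0,False) - M b (1,False)) (\<lambda>b. M b (0,False) - M b (1,False)) a"
      by (simp add: \<gamma>_def[abs_def])
    also have "\<dots> = M a (0,False) + M a (1,False)"
      by (simp only: prodA_diff1 prodA_diff2 PP) simp
    finally show ?thesis using E1 by simp
  qed
  have ZZ: "prodA Z Z a = 0" for a
  proof -
    have "prodA Z Z a = prodA (\<lambda>b. M b (0,True) + M b (1,True)) (\<lambda>b. M b (0,True) + M b (1,True)) a"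
      by (simp add: Z_def[abs_def])
    also have "\<dots> = 0"
      by (simp only: prodA_add1 prodA_add2 QQ) simp
    finally show ?thesis .
  qed
  have QZ: "M a (i,True) = prodA (\<lambda>b. M b (i,False)) Z a" for i a
  proof -
    have "prodA (\<lambda>b. M b (i,False)) Z a = prodA (\<lambda>b. M b (i,False)) (\<lambda>b. M b (0,True) + M b (1,True)) a"
      by (simp add: Z_def[abs_def])
    also have "\<dots> = M a (i,True)"
      using two_cases[of i] by (auto simp only: prodA_add2 PQ) simp_all
    finally show ?thesis by simp
  qed
  have gT: "\<gamma> (a,True) = 0" for a
    using G[of "(a,True)" "(a,True)"] by (simp add: dc_sum)
  have gg: "\<gamma> (a,False) * \<gamma> (c,False) = (if a = c then \<gamma> (a,False) else 0)" for a c
    using G[of "(a,False)" "(c,False)"] by (simp add: dc_sum)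
  have g0: "\<gamma>(0,False) + \<gamma>(2,False) = 1"
    using GG[of "(0,False)"] prodA_0F[of \<gamma> \<gamma>, OF gT gT] gg[of 0 0] gg[of 1 3] gg[of 2 2] gg[of 3 1]
    by (simp add: basisvec_def)
  have g13: "\<gamma>(1,False) + \<gamma>(3,False) = 0"
    using GG[of "(2,False)"] prodA_2F[of \<gamma> \<gamma>, OF gT gT] gg[of 0 2] gg[of 1 1] gg[of 2 0] gg[of 3 3]
    by (simp add: basisvec_def)
  have g1: "\<gamma>(1,False) = 0" and g3: "\<gamma>(3,False) = 0"
  proof -
    have a: "\<gamma>(1,False) = - \<gamma>(3,False)" using g13 by (simp add: eq_neg_iff_add_eq_0)
    have "\<gamma>(3,False) = \<gamma>(3,False) * \<gamma>(3,False)" using gg[of 3 3] by simp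
    also have "\<dots> = \<gamma>(1,False) * \<gamma>(1,False)" using a by simp
    also have "\<dots> = \<gamma>(1,False)" using gg[of 1 1] by simp
    finally have "\<gamma>(3,False) = - \<gamma>(3,False)" using a by simp
    then show "\<gamma>(3,False) = 0" by simp
    then show "\<gamma>(1,False) = 0" using a by simp
  qed
  have g02: "\<gamma>(0,False) * \<gamma>(2,False) = 0" using gg[of 0 2] by simp
  have g00: "\<gamma>(0,False) * \<gamma>(0,False) = \<gamma>(0,False)" using gg[of 0 0] by simp
  have ZT: "Z (a,True) = 0" for a
  proof (cases "a = 0")
    case True
    show ?thesis using ZS[of "(0,True)" "(1,False)"] g1 True by (simp add: dc_sum basisvec_def)
  next
    case False
    show ?thesis using ZS[of "(a,False)" "(a,True)"] gT False by (simp add: dc_sum basisvec_def)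
  qed
  have Z1: "Z(1,False) = 0" using ZS[of "(1,False)" "(1,False)"] g1 by (simp add: dc_sum basisvec_def)
  have Z3: "Z(3,False) = 0" using ZS[of "(3,False)" "(3,False)"] g3 by (simp add: dc_sum basisvec_def)
  have Z00: "Z(0,False) * \<gamma>(0,False) = 0" using ZS[of "(0,False)" "(0,False)"] by (simp add: dc_sum basisvec_def)
  have Z02: "Z(2,False) + Z(0,False) * \<gamma>(2,False) = 0" using ZS[of "(0,False)" "(2,False)"] by (simp add: dc_sum basisvec_def)
  have Zsq: "Z(0,False) * Z(0,False) + Z(2,False) * Z(2,False) = 0"
    using ZZ[of "(0,False)"] prodA_0F[of Z Z, OF ZT ZT] Z1 Z3 by simp
  have Z0: "Z(0,False) = 0" and Z2: "Z(2,False) = 0"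
  proof -
    have "\<gamma>(0,False) = 0 \<or> \<gamma>(0,False) = 1" using g00
      by (metis mult_cancel_left1 mult_zero_left)
    then have "Z(0,False) = 0 \<and> Z(2,False) = 0"
    proof
      assume h: "\<gamma>(0,False) = 0"
      then have "\<gamma>(2,False) = 1" using g0 by simp
      then have "Z(2,False) = - Z(0,False)" using Z02 by (simp add: eq_neg_iff_add_eq_0)
      then have "2 * (Z(0,False) * Z(0,False)) = 0" using Zsq by simp
      then have "Z(0,False) = 0" by simp
      then show ?thesis using \<open>Z(2,False) = - Z(0,False)\<close> by simp
    next
      assume h: "\<gamma>(0,False) = 1"
      then have "\<gamma>(2,False) = 0" using g0 by simp
      then show ?thesis using Z00 Z02 h by simp
    qed
    then show "Z(0,False) = 0" "Z(2,False) = 0" by simp_all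
  qed
  have Zz: "Z = (\<lambda>_. 0)"
  proof (rule ext)
    fix b :: "4\<times>bool"
    obtain i j where b: "b = (i,j)" by (cases b)
    show "Z b = 0" unfolding b using four_cases[of i] ZT Z0 Z1 Z2 Z3 by (cases j) auto
  qed
  have Qz: "M a (k,True) = 0" for a k
    using QZ[of a k] unfolding Zz prodA_zero2 .
  have gform: "\<gamma> a = \<gamma>(0,False) * basisvec (0,False) a + \<gamma>(2,False) * basisvec (2,False) a" for a
  proof -
    obtain i j where b: "a = (i,j)" by (cases a)
    show ?thesis unfolding b using four_cases[of i] gT g1 g3 by (cases j) (auto simp: basisvec_def)
  qed
  show ?thesis
  proof (intro conjI exI allI)
    show "p (basisvec a) (k,True) = 0" for a k using Qz[of a k] by (simp add: M_def)
    show "\<gamma>(0,False) + \<gamma>(2,False) = 1" by (rule g0)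
    show "p (basisvec a) (0,False) = (basisvec (0,False) a + \<gamma>(0,False) * basisvec (0,False) a + \<gamma>(2,False) * basisvec (2,False) a)/2" for a
    proof -
      have "M a (0,False) = ((M a (0,False) + M a (1,False)) + (M a (0,False) - M a (1,False)))/2" by (simp add: field_simps)
      also have "\<dots> = (basisvec (0,False) a + \<gamma> a)/2" by (simp only: E1 \<gamma>_def)
      finally show ?thesis unfolding gform[of a] M_def by (simp add: add.assoc)
    qed
    show "p (basisvec a) (1,False) = (basisvec (0,False) a - \<gamma>(0,False) * basisvec (0,False) a - \<gamma>(2,False) * basisvec (2,False) a)/2" for a
    proof -
      have "M a (1,False) = ((M a (0,False) + M a (1,False)) - (M a (0,False) - M a (1,False)))/2" by (simp add: field_simps)
      also have "\<dots> = (basisvec (0,False) a - \<gamma> a)/2" by (simp only: E1 \<gamma>_def)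
      finally show ?thesis unfolding gform[of a] M_def by (simp add: diff_diff_eq)
    qed
  qed
qed

lemma grouplike_T: "grouplike (Tsw::(2\<times>bool,'k::field) hopf_sc) (basisvec (k,False))"
  unfolding grouplike_def
proof
  show "basisvec (k,False) \<noteq> (\<lambda>_. 0::'k)"
  proof
    assume "basisvec (k,False) = (\<lambda>_. 0::'k)"
    then have "basisvec (k,False) (k,False) = (0::'k)" by simp
    then show False by (simp add: basisvec_def)
  qed
  show "hcomult Tsw (basisvec (k,False)) = tens (basisvec (k,False)) (basisvec (k,False) :: _ \<Rightarrow> 'k)"
  proof (rule ext, clarify)
    fix a p c q
    show "hcomult Tsw (basisvec (k,False)) ((a,p),(c,q)) = tens (basisvec (k,False)) (basisvec (k,False) :: _ \<Rightarrow> 'k) ((a,p),(c,q))"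
      by (cases p; cases q) (auto simp: hcomult_T tens_def basisvec_def)
  qed
qed

lemma part1:
  fixes p :: "(4\<times>bool \<Rightarrow> 'k::{alg_closed_field,field_char_0}) \<Rightarrow> (2\<times>bool \<Rightarrow> 'k)"
  assumes H: "hopf_mor Adual Tsw p"
  shows "p ` UNIV \<subseteq> kG Tsw \<and> hopf_gen Adual {alpha, hmult Adual e11 e21} \<subseteq> coinv Adual Tsw p"
proof -
  obtain g0 g2 where QT: "\<And>a k. p (basisvec a) (k,True) = 0" and g: "g0 + g2 = 1"
    and P0: "\<And>a. p (basisvec a) (0,False) = (basisvec (0,False) a + g0 * basisvec (0,False) a + g2 * basisvec (2,False) a)/2"
    and P1: "\<And>a. p (basisvec a) (1,False) = (basisvec (0,False) a - g0 * basisvec (0,False) a - g2 * basisvec (2,False) a)/2"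
    using pi_struct[OF H] by blast
  have lin: "is_linear p" using H by (simp add: hopf_mor_def)
  have exp: "p u t = (\<Sum>a\<in>UNIV. u a * p (basisvec a) t)" for u t
    using lin_expand[OF lin, of u] by simp
  have pT: "p u (k,True) = 0" for u k by (subst exp) (simp add: QT)
  have "p u \<in> kG Tsw" for u
  proof -
    have eq: "p u = (\<lambda>x. (\<lambda>x. p u (0,False) * basisvec (0,False) x) x + (\<lambda>x. p u (1,False) * basisvec (1,False) x) x)"
    proof (rule ext, clarify)
      fix k :: 2 and j
      show "p u (k,j) = p u (0,False) * basisvec (0,False) (k,j) + p u (1,False) * basisvec (1,False) (k,j)"
        using two_cases[of k] pT by (cases j) (auto simp: basisvec_def)
    qed
    show ?thesis unfolding kG_def
      apply (subst eq)
      by (intro lspan_add lspan_scale lspan_base) (simp_all add: grouplike_T)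
  qed
  moreover have "hopf_gen Adual {alpha, hmult Adual e11 e21} \<subseteq> coinv Adual Tsw p"
  proof
    fix h :: "4\<times>bool \<Rightarrow> 'k" assume "h \<in> hopf_gen Adual {alpha, hmult Adual e11 e21}"
    then have "h \<in> Vset" using T_eq by blast
    then have V: "h(i+2,j) = h(i,j)" for i j by (simp add: Vset_def)
    have "tmap (\<lambda>u. u) p (hcomult Adual h) = tens h (hone Tsw)"
    proof (rule ext, clarify)
      fix i j and k :: 2 and l
      have g2: "g2 = 1 - g0" using g by (simp add: eq_diff_eq add.commute)
      show "tmap (\<lambda>u. u) p (hcomult Adual h) ((i,j),(k,l)) = tens h (hone Tsw) ((i,j),(k,l))"
      proof (cases l)
        case True
        then show ?thesis by (simp only: tmap_id sum4b QT) (simp add: tens_def hone_T basisvec_def)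
      next
        case False
        then show ?thesis using two_cases[of k]
          apply (elim disjE)
          subgoal by (simp only: tmap_id sum4b P0 P1) (simp add: hcomult_A V tens_def hone_T basisvec_def g2 field_simps)
          subgoal by (simp only: tmap_id sum4b P0 P1) (simp add: hcomult_A V tens_def hone_T basisvec_def g2 field_simps)
          done
      qed
    qed
    then show "h \<in> coinv Adual Tsw p" by (simp add: coinv_def)
  qed
  ultimately show ?thesis by blast
qed

theorem lemma3p4:
  fixes T :: "(4 \<times> bool \<Rightarrow> 'k::{alg_closed_field, field_char_0}) set"
  defines "T \<equiv> hopf_gen Adual {alpha, hmult Adual e11 e21}"
  shows "(\<forall>\<pi>. hopf_mor (Adual :: (4 \<times> bool, 'k) hopf_sc) (Tsw :: (2 \<times> bool, 'k) hopf_sc) \<pi> \<longrightarrow>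
              \<pi> ` UNIV \<subseteq> kG (Tsw :: (2 \<times> bool, 'k) hopf_sc) \<and> T \<subseteq> coinv Adual Tsw \<pi>)
       \<and> (\<exists>\<psi>. exact_seq_incl (Adual :: (4 \<times> bool, 'k) hopf_sc) T (group_alg :: (2, 'k) hopf_sc) \<psi>)"
proof
  show "\<forall>\<pi>. hopf_mor (Adual :: (4 \<times> bool, 'k) hopf_sc) (Tsw :: (2 \<times> bool, 'k) hopf_sc) \<pi> \<longrightarrow>
              \<pi> ` UNIV \<subseteq> kG (Tsw :: (2 \<times> bool, 'k) hopf_sc) \<and> T \<subseteq> coinv Adual Tsw \<pi>"
    unfolding T_def using part1 by blast
  have TV: "T = Vset" unfolding T_def by (rule T_eq)
  show "\<exists>\<psi>. exact_seq_incl (Adual :: (4 \<times> bool, 'k) hopf_sc) T (group_alg :: (2, 'k) hopf_sc) \<psi>"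
    unfolding TV using part2 by blast
qed

end
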